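(* For every $h\in\widehat{\operatorname{PC}^{\bowtie}}$ and every partition $\mathcal P$ associated with $h$, one has $\varepsilon(h)=\varepsilon(h,\mathcal P)$.
   Context: $X=[0,1[$; $\widehat{\operatorname{PC}^{\bowtie}}$ is the group of bijections $X\to X$ continuous outside a finite subset, containing the group ${\mathfrak S}_{\mathrm{fin}}$ of finitely supported permutations with classical signature $\operatorname{sgn}$ valued in $\mathbb{Z}/2\mathbb{Z}$. For $h\in\widehat{\operatorname{PC}^{\bowtie}}$, a partition associated with $h$ is a finite partition $\mathcal P=\{I_1,\dots,I_n\}$ of $X$ into intervals $I_j=[\alpha_j,b_j[$ such that $h$ is continuous on $I_j^\circ=]\alpha_j,b_j[$ for each $j$ (so $h$ is strictly monotone there and $h(I_j^\circ)$ is an open interval). Let $\beta_j$ be the left endpoint of $h(I_j^\circ)$; $\{h(\alpha_j)\}=\{\beta_j\}$, and $\sigma_{(h,\mathcal P)}\in{\mathfrak S}_{\mathrm{fin}}$ sends $h(\alpha_j)$ to $\beta_j$ for each $j$ and fixes all other points. $R(h,\mathcal P)$ is the number of $j$ with $h$ decreasing on $I_j^\circ$, and $\varepsilon(h,\mathcal P)=R(h,\mathcal P)+\operatorname{sgn}(\sigma_{(h,\mathcal P)})\bmod 2$. There is a unique associated partition $\mathcal P^{\min}_h$ with the fewest intervals, every associated partition refines it, and $\varepsilon(h):=\varepsilon(h,\mathcal P^{\min}_h)$. *)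

theory Defs
  imports "HOL-Analysis.Analysis" "HOL-Combinatorics.Permutations"
begin

definition Xs :: "real set" where
  "Xs = {0..<1}"

definition PC_hat :: "(real \<Rightarrow> real) \<Rightarrow> bool" where
  "PC_hat h \<longleftrightarrow> bij_betw h Xs Xs \<and>
     (\<exists>F. finite F \<and> (\<forall>x \<in> Xs - F. continuous (at x within Xs) h))"

definition assoc_partition :: "(real \<Rightarrow> real) \<Rightarrow> real set set \<Rightarrow> bool" where
  "assoc_partition h P \<longleftrightarrow> finite P \<and> \<Union>P = Xs \<and>
     (\<forall>I\<in>P. \<forall>J\<in>P. I \<noteq> J \<longrightarrow> I \<inter> J = {}) \<and>
     (\<forall>I\<in>P. \<exists>a b. a < b \<and> I = {a..<b} \<and> continuous_on {a<..<b} h)"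

definition lend :: "real set \<Rightarrow> real" where "lend I = Inf I"
definition interior_iv :: "real set \<Rightarrow> real set" where
  "interior_iv I = {Inf I<..<Sup I}"

definition beta_pt :: "(real \<Rightarrow> real) \<Rightarrow> real set \<Rightarrow> real" where
  "beta_pt h I = Inf (h ` interior_iv I)"

definition sigma_hP :: "(real \<Rightarrow> real) \<Rightarrow> real set set \<Rightarrow> real \<Rightarrow> real" where
  "sigma_hP h P x = (if \<exists>I\<in>P. x = h (lend I)
      then beta_pt h (SOME I. I \<in> P \<and> x = h (lend I)) else x)"

definition R_hP :: "(real \<Rightarrow> real) \<Rightarrow> real set set \<Rightarrow> nat" where
  "R_hP h P = card {I\<in>P. \<forall>x\<in>interior_iv I. \<forall>y\<in>interior_iv I. x < y \<longrightarrow> h y < h x}"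

definition sgn2 :: "(real \<Rightarrow> real) \<Rightarrow> nat" where
  "sgn2 s = (if evenperm s then 0 else 1)"

definition eps_hP :: "(real \<Rightarrow> real) \<Rightarrow> real set set \<Rightarrow> nat" where
  "eps_hP h P = (R_hP h P + sgn2 (sigma_hP h P)) mod 2"

definition Pmin :: "(real \<Rightarrow> real) \<Rightarrow> real set set" where
  "Pmin h = (THE P. assoc_partition h P \<and> (\<forall>Q. assoc_partition h Q \<longrightarrow> card P \<le> card Q))"

definition eps_h :: "(real \<Rightarrow> real) \<Rightarrow> nat" where
  "eps_h h = eps_hP h (Pmin h)"

end

theory Submission
  imports Defs
begin


definition nxt :: "real set \<Rightarrow> real \<Rightarrow> real" where
  "nxt L a = Min (insert 1 {x\<in>L. a < x})"
definition part :: "real set \<Rightarrow> real set set" where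
  "part L = (\<lambda>a. {a..<nxt L a}) ` L"
definition good :: "real set \<Rightarrow> bool" where
  "good L \<longleftrightarrow> finite L \<and> 0 \<in> L \<and> L \<subseteq> Xs"
definition contp :: "(real \<Rightarrow> real) \<Rightarrow> real set \<Rightarrow> bool" where
  "contp h L \<longleftrightarrow> (\<forall>a\<in>L. continuous_on {a<..<nxt L a} h)"

lemma nxt_fin: "finite L \<Longrightarrow> finite (insert 1 {x\<in>L. a < x})" by auto

lemma nxt_le1: "finite L \<Longrightarrow> nxt L a \<le> 1"
  unfolding nxt_def by (rule Min_le) auto

lemma nxt_min: "finite L \<Longrightarrow> x \<in> L \<Longrightarrow> a < x \<Longrightarrow> nxt L a \<le> x"
  unfolding nxt_def by (rule Min_le) auto

lemma nxt_mem: "finite L \<Longrightarrow> nxt L a = 1 \<or> nxt L a \<in> L"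
proof -
  assume f: "finite L"
  have "nxt L a \<in> insert 1 {x\<in>L. a < x}" unfolding nxt_def by (rule Min_in) (use f in auto)
  then show ?thesis by auto
qed

lemma nxt_gt: "finite L \<Longrightarrow> a < 1 \<Longrightarrow> a < nxt L a"
proof -
  assume f: "finite L" "a < 1"
  have "nxt L a \<in> insert 1 {x\<in>L. a < x}" unfolding nxt_def by (rule Min_in) (use f in auto)
  then show ?thesis using f by auto
qed

lemma nxt_eqI:
  assumes "finite L" "a < n" "n = 1 \<or> n \<in> L" "n \<le> 1" "\<And>x. x \<in> L \<Longrightarrow> a < x \<Longrightarrow> n \<le> x"
  shows "nxt L a = n"
  unfolding nxt_def
  by (rule Min_eqI) (use assms in auto)

lemma good_lt1: "good L \<Longrightarrow> a \<in> L \<Longrightarrow> 0 \<le> a \<and> a < 1"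
  unfolding good_def Xs_def by auto

lemma nxt_gt': "good L \<Longrightarrow> a \<in> L \<Longrightarrow> a < nxt L a"
  using nxt_gt good_lt1 good_def by blast

lemma nxt_between: "good L \<Longrightarrow> a \<in> L \<Longrightarrow> a' \<in> L \<Longrightarrow> a < a' \<Longrightarrow> nxt L a \<le> a'"
  using nxt_min good_def by blast

lemma cover:
  assumes "good L" "x \<in> Xs"
  shows "\<exists>a\<in>L. a \<le> x \<and> x < nxt L a"
proof -
  let ?S = "{y\<in>L. y \<le> x}"
  have fS: "finite ?S" using assms unfolding good_def by auto
  have ne: "0 \<in> ?S" using assms unfolding good_def Xs_def by auto
  define a where "a = Max ?S"
  have aS: "a \<in> ?S" unfolding a_def using fS ne by (intro Max_in) auto
  have "x < nxt L a"
  proof (rule ccontr)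
    assume "\<not> x < nxt L a"
    then have le: "nxt L a \<le> x" by simp
    have "nxt L a \<noteq> 1" using le assms(2) unfolding Xs_def by auto
    then have "nxt L a \<in> L" using nxt_mem assms(1) good_def by blast
    then have "nxt L a \<le> a" using Max_ge[OF fS, of "nxt L a"] le by (simp add: a_def[symmetric])
    moreover have "a < nxt L a" using nxt_gt' aS assms(1) by blast
    ultimately show False by simp
  qed
  then show ?thesis using aS by blast
qed

lemma lend_iv: "a < b \<Longrightarrow> lend {a..<b} = a"
  unfolding lend_def by simp
lemma int_iv: "a < b \<Longrightarrow> interior_iv {a..<b} = {a<..<b}"
  unfolding interior_iv_def by simp

lemma part_inj: "good L \<Longrightarrow> inj_on (\<lambda>a. {a..<nxt L a}) L"
  by (rule inj_onI) (metis lend_iv nxt_gt')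

lemma card_part: "good L \<Longrightarrow> card (part L) = card L"
  unfolding part_def by (rule card_image[OF part_inj])

lemma part_assoc:
  assumes "good L" "contp h L"
  shows "assoc_partition h (part L)"
  unfolding assoc_partition_def
proof (intro conjI ballI impI)
  show "finite (part L)" using assms unfolding part_def good_def by auto
  show "\<Union> (part L) = Xs"
  proof
    show "\<Union> (part L) \<subseteq> Xs"
    proof
      fix x assume "x \<in> \<Union> (part L)"
      then obtain a where a: "a \<in> L" "a \<le> x" "x < nxt L a" unfolding part_def by auto
      then show "x \<in> Xs" using good_lt1[OF assms(1) a(1)] nxt_le1[of L a] assms(1)
        unfolding good_def Xs_def by auto
    qed
    show "Xs \<subseteq> \<Union> (part L)"
      using cover[OF assms(1)] unfolding part_def by fastforce
  qed
  fix I J assume IJ: "I \<in> part L" "J \<in> part L" "I \<noteq> J"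
  then obtain a a' where a: "a \<in> L" "a' \<in> L" "I = {a..<nxt L a}" "J = {a'..<nxt L a'}"
    unfolding part_def by auto
  then have "a \<noteq> a'" using IJ by auto
  then consider "a < a'" | "a' < a" by linarith
  then show "I \<inter> J = {}"
  proof cases
    case 1 then have "nxt L a \<le> a'" using nxt_between assms(1) a by blast
    then show ?thesis using a by auto
  next
    case 2 then have "nxt L a' \<le> a" using nxt_between assms(1) a by blast
    then show ?thesis using a by auto
  qed
next
  fix I assume "I \<in> part L"
  then obtain a where a: "a \<in> L" "I = {a..<nxt L a}" unfolding part_def by auto
  then show "\<exists>a b. a < b \<and> I = {a..<b} \<and> continuous_on {a<..<b} h"
    using nxt_gt'[OF assms(1) a(1)] assms(2) unfolding contp_def by blast
qed



lemma assoc_fin: "assoc_partition h P \<Longrightarrow> finite P" by (simp add: assoc_partition_def)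
lemma assoc_un: "assoc_partition h P \<Longrightarrow> \<Union>P = Xs" by (simp add: assoc_partition_def)
lemma assoc_dis: "assoc_partition h P \<Longrightarrow> I \<in> P \<Longrightarrow> J \<in> P \<Longrightarrow> I \<noteq> J \<Longrightarrow> I \<inter> J = {}"
  unfolding assoc_partition_def by blast
lemma assoc_ex: "assoc_partition h P \<Longrightarrow> I \<in> P \<Longrightarrow> \<exists>a b. a < b \<and> I = {a..<b} \<and> continuous_on {a<..<b} h"
  unfolding assoc_partition_def by blast
lemma assoc_iv:
  assumes "assoc_partition h P" "I \<in> P"
  obtains a b where "a < b" "I = {a..<b}" "continuous_on {a<..<b} h"
  using assoc_ex[OF assms] by blast


lemma assoc_part:
  assumes A: "assoc_partition h P" and L_def: "L = lend ` P"
  shows "good L \<and> contp h L \<and> P = part L"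
proof -
  have fin: "finite P" using assoc_fin[OF A] .
  have un: "\<Union>P = Xs" using assoc_un[OF A] .
  have dis: "\<And>I J. I \<in> P \<Longrightarrow> J \<in> P \<Longrightarrow> I \<noteq> J \<Longrightarrow> I \<inter> J = {}"
    using assoc_dis[OF A] .
  have finL: "finite L" unfolding L_def using fin by auto
  have key: "nxt L a = b" if I: "I \<in> P" "a < b" "I = {a..<b}" for I a b
  proof -
    have IX: "I \<subseteq> Xs" using un I(1) by auto
    have a0: "0 \<le> a" using IX I unfolding Xs_def by auto
    have b1: "b \<le> 1"
    proof (rule ccontr)
      assume "\<not> b \<le> 1"
      then have "max a 1 \<in> I" using I by auto
      then show False using IX unfolding Xs_def by auto
    qed
    have bL: "b \<in> L" if "b < 1"
    proof -
      have "b \<in> Xs" using that a0 I unfolding Xs_def by auto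
      then obtain J where J: "J \<in> P" "b \<in> J" using un by auto
      obtain a' b' where J': "a' < b'" "J = {a'..<b'}" "continuous_on {a'<..<b'} h"
        by (rule assoc_iv[OF A J(1)])
      have "a' = b"
      proof (rule ccontr)
        assume "a' \<noteq> b"
        then have "a' < b" using J J' by auto
        then have "max a a' \<in> I \<inter> J" using I J J' by auto
        then have "I = J" using dis I(1) J(1) by blast
        then show False using J I by auto
      qed
      then have "lend J = b" using lend_iv[OF J'(1)] J'(2) by simp
      then show ?thesis unfolding L_def using J(1) by force
    qed
    show ?thesis
    proof (rule nxt_eqI[OF finL I(2)])
      show "b = 1 \<or> b \<in> L" using bL b1 by linarith
      show "b \<le> 1" by fact
      fix x assume x: "x \<in> L" "a < x"
      show "b \<le> x"
      proof (rule ccontr)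
        assume "\<not> b \<le> x"
        obtain J where J: "J \<in> P" "x = lend J" using x L_def by auto
        obtain a' b' where J': "a' < b'" "J = {a'..<b'}" "continuous_on {a'<..<b'} h"
          by (rule assoc_iv[OF A J(1)])
        have "x = a'" using J J' lend_iv by simp
        then have "x \<in> I \<inter> J" using J' I x \<open>\<not> b \<le> x\<close> by auto
        then have "I = J" using dis I(1) J(1) by blast
        then have "lend I = lend J" by simp
        then show False using lend_iv[OF I(2)] lend_iv[OF J'(1)] I(3) J'(2) \<open>x = a'\<close> x(2) by simp
      qed
    qed
  qed
  have g: "good L"
    unfolding good_def
  proof (intro conjI)
    show "finite L" by fact
    have "0 \<in> Xs" unfolding Xs_def by simp
    then obtain I where I: "I \<in> P" "0 \<in> I" using un by auto
    obtain a b where ab: "a < b" "I = {a..<b}" "continuous_on {a<..<b} h"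
      by (rule assoc_iv[OF A I(1)])
    have "a \<in> I" using ab by simp
    then have "a \<in> Xs" using I un by blast
    then have "a = 0" using I(2) ab(2) unfolding Xs_def by simp
    then have "lend I = 0" using lend_iv[OF ab(1)] ab(2) by simp
    then show "0 \<in> L" unfolding L_def using I(1) by force
    show "L \<subseteq> Xs"
    proof
      fix x assume "x \<in> L"
      then obtain I where I: "I \<in> P" "x = lend I" unfolding L_def by auto
      obtain a b where ab: "a < b" "I = {a..<b}" "continuous_on {a<..<b} h"
        by (rule assoc_iv[OF A I(1)])
      have "x = a" using I(2) lend_iv[OF ab(1)] ab(2) by simp
      moreover have "a \<in> I" using ab by simp
      ultimately show "x \<in> Xs" using I(1) un by blast
    qed
  qed
  have c: "contp h L"
    unfolding contp_def
  proof
    fix x assume "x \<in> L"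
    then obtain I where I: "I \<in> P" "x = lend I" unfolding L_def by auto
    obtain a b where ab: "a < b" "I = {a..<b}" "continuous_on {a<..<b} h"
      by (rule assoc_iv[OF A I(1)])
    have "x = a" using I(2) lend_iv[OF ab(1)] ab(2) by simp
    then show "continuous_on {x<..<nxt L x} h" using key[OF I(1) ab(1,2)] ab(3) by simp
  qed
  have eq: "{lend I..<nxt L (lend I)} = I" if I: "I \<in> P" for I
  proof -
    obtain a b where ab: "a < b" "I = {a..<b}" "continuous_on {a<..<b} h"
      by (rule assoc_iv[OF A I])
    show ?thesis using key[OF I ab(1,2)] ab(2) lend_iv[OF ab(1)] by simp
  qed
  have "(\<lambda>I. {lend I..<nxt L (lend I)}) ` P = (\<lambda>I. I) ` P"
    by (rule image_cong[OF refl eq])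
  have "part L = (\<lambda>a. {a..<nxt L a}) ` (lend ` P)" unfolding part_def
    using L_def by (rule arg_cong)
  also have "\<dots> = (\<lambda>I. {lend I..<nxt L (lend I)}) ` P" by (simp add: image_image)
  finally have "P = part L" using \<open>(\<lambda>I. {lend I..<nxt L (lend I)}) ` P = (\<lambda>I. I) ` P\<close> by simp
  then show ?thesis using g c by blast
qed



definition dec :: "(real \<Rightarrow> real) \<Rightarrow> real \<Rightarrow> real \<Rightarrow> bool" where
  "dec h p q \<longleftrightarrow> (\<forall>x\<in>{p<..<q}. \<forall>y\<in>{p<..<q}. x < y \<longrightarrow> h y < h x)"

definition bt :: "(real \<Rightarrow> real) \<Rightarrow> real set \<Rightarrow> real \<Rightarrow> real" where
  "bt h L a = Inf (h ` {a<..<nxt L a})"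

lemma filter_image: "{I \<in> f ` L. Q I} = f ` {a\<in>L. Q (f a)}"
  by auto

lemma R_part:
  assumes g: "good L"
  shows "R_hP h (part L) = card {a\<in>L. dec h a (nxt L a)}"
proof -
  let ?f = "\<lambda>a. {a..<nxt L a}"
  let ?Q = "\<lambda>I. \<forall>x\<in>interior_iv I. \<forall>y\<in>interior_iv I. x < y \<longrightarrow> h y < h x"
  have "{a\<in>L. ?Q (?f a)} = {a\<in>L. dec h a (nxt L a)}"
  proof (rule Collect_cong)
    fix a
    show "(a \<in> L \<and> ?Q (?f a)) = (a \<in> L \<and> dec h a (nxt L a))"
      using int_iv[OF nxt_gt'[OF g, of a]] unfolding dec_def by auto
  qed
  then have "{I\<in>part L. ?Q I} = ?f ` {a\<in>L. dec h a (nxt L a)}"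
    unfolding part_def filter_image by simp
  moreover have "inj_on ?f {a\<in>L. dec h a (nxt L a)}"
    using part_inj[OF g] by (rule inj_on_subset) auto
  ultimately show ?thesis unfolding R_hP_def by (simp add: card_image)
qed

lemma sig_in:
  assumes g: "good L" and inj: "inj_on h L" and a: "a \<in> L"
  shows "sigma_hP h (part L) (h a) = bt h L a"
proof -
  have lt: "a < nxt L a" using nxt_gt'[OF g a] .
  have I: "{a..<nxt L a} \<in> part L" unfolding part_def using a by auto
  have ex: "\<exists>I\<in>part L. h a = h (lend I)"
    using I lend_iv[OF lt] by force
  have some: "(SOME I. I \<in> part L \<and> h a = h (lend I)) = {a..<nxt L a}"
  proof (rule some_equality)
    show "{a..<nxt L a} \<in> part L \<and> h a = h (lend {a..<nxt L a})" using I lend_iv[OF lt] by simp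
    fix J assume J: "J \<in> part L \<and> h a = h (lend J)"
    then obtain a' where a': "a' \<in> L" "J = {a'..<nxt L a'}" unfolding part_def by auto
    have "lend J = a'" using a' lend_iv[OF nxt_gt'[OF g a'(1)]] by simp
    then have "a' = a" using J inj a a'(1) inj_on_eq_iff by metis
    then show "J = {a..<nxt L a}" using a' by simp
  qed
  show ?thesis unfolding sigma_hP_def using ex
    by (simp add: some beta_pt_def int_iv[OF lt] bt_def)
qed

lemma sig_out:
  assumes g: "good L" and x: "x \<notin> h ` L"
  shows "sigma_hP h (part L) x = x"
proof -
  have "\<not> (\<exists>I\<in>part L. x = h (lend I))"
  proof
    assume "\<exists>I\<in>part L. x = h (lend I)"
    then obtain a where a: "a \<in> L" "x = h (lend {a..<nxt L a})" unfolding part_def by auto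
    then have "x = h a" using lend_iv[OF nxt_gt'[OF g a(1)]] by simp
    then show False using x a(1) by auto
  qed
  then show ?thesis unfolding sigma_hP_def by auto
qed

lemma inf_dom:
  fixes A B :: "real set"
  assumes "A \<subseteq> B" "A \<noteq> {}" "bdd_below B" "\<And>y. y \<in> B \<Longrightarrow> \<exists>x\<in>A. x \<le> y"
  shows "Inf A = Inf B"
proof (rule antisym)
  show "Inf B \<le> Inf A" using cInf_superset_mono[OF assms(2,3,1)] .
  have bA: "bdd_below A" using bdd_below_mono[OF assms(3,1)] .
  show "Inf A \<le> Inf B"
  proof (rule cInf_greatest)
    show "B \<noteq> {}" using assms(1,2) by auto
    fix y assume "y \<in> B"
    then obtain x where "x \<in> A" "x \<le> y" using assms(4) by blast
    then show "Inf A \<le> y" using cInf_lower[OF _ bA] by (meson order_trans)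
  qed
qed

lemma inf_cont:
  fixes h :: "real \<Rightarrow> real"
  assumes S: "S = {c<..<b} \<or> S = {b<..<c}" and cb: "c < b \<or> b < c" and bS: "S \<noteq> {}"
    and cont: "isCont h c" and ge: "\<And>y. y \<in> S \<Longrightarrow> h c \<le> h y"
  shows "Inf (h ` S) = h c"
proof -
  have ne: "h ` S \<noteq> {}" using bS by auto
  have bdd: "bdd_below (h ` S)" using ge by (intro bdd_belowI[of _ "h c"]) auto
  have ge2: "h c \<le> Inf (h ` S)" using ne ge by (intro cInf_greatest) auto
  show ?thesis
  proof (rule antisym[OF _ ge2], rule ccontr)
    assume "\<not> Inf (h ` S) \<le> h c"
    then have e: "Inf (h ` S) - h c > 0" by simp
    obtain d where d: "d > 0" "\<And>x'. dist x' c < d \<Longrightarrow> dist (h x') (h c) < Inf (h ` S) - h c"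
      using cont e unfolding continuous_at_eps_delta by blast
    have "\<exists>y\<in>S. dist y c < d"
    proof (cases "S = {c<..<b}")
      case True
      then have cb: "c < b" using bS by auto
      define m where "m = min d (b - c)"
      have m: "0 < m" "m \<le> d" "m \<le> b - c" unfolding m_def using cb d(1) by auto
      have "c < c + m / 2" "c + m / 2 < b" "dist (c + m / 2) c < d"
        using m by (simp_all add: dist_real_def)
      then show ?thesis using True by (intro bexI[of _ "c + m / 2"]) auto
    next
      case False
      then have Sb: "S = {b<..<c}" using S by auto
      then have cb: "b < c" using bS by auto
      define m where "m = min d (c - b)"
      have m: "0 < m" "m \<le> d" "m \<le> c - b" unfolding m_def using cb d(1) by auto
      have "b < c - m / 2" "c - m / 2 < c" "dist (c - m / 2) c < d"
        using m by (simp_all add: dist_real_def)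
      then show ?thesis using Sb by (intro bexI[of _ "c - m / 2"]) auto
    qed
    then obtain y where y: "y \<in> S" "dist y c < d" by blast
    have "h y < Inf (h ` S)" using d(2)[OF y(2)] by (auto simp: dist_real_def)
    moreover have "Inf (h ` S) \<le> h y" using y(1) bdd by (intro cInf_lower) auto
    ultimately show False by simp
  qed
qed



definition ok :: "(real \<Rightarrow> real) \<Rightarrow> real set \<Rightarrow> bool" where
  "ok h L \<longleftrightarrow> good L \<and> contp h L \<and> bij_betw h Xs Xs"

lemma ok_good: "ok h L \<Longrightarrow> good L" by (simp add: ok_def)

lemma iv_sub: "good L \<Longrightarrow> a \<in> L \<Longrightarrow> {a<..<nxt L a} \<subseteq> Xs"
  using good_lt1[of L a] nxt_le1[of L a] unfolding good_def Xs_def by auto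

lemma iv_disj:
  assumes g: "good L" and a: "a \<in> L" "a' \<in> L" "a \<noteq> a'"
  shows "{a<..<nxt L a} \<inter> {a'<..<nxt L a'} = {}"
proof -
  consider "a < a'" | "a' < a" using a by linarith
  then show ?thesis
  proof cases
    case 1 then have "nxt L a \<le> a'" using nxt_between g a by blast
    then show ?thesis by auto
  next
    case 2 then have "nxt L a' \<le> a" using nxt_between g a by blast
    then show ?thesis by auto
  qed
qed

lemma U_props:
  assumes ok: "ok h L" and a: "a \<in> L"
  defines "U \<equiv> h ` {a<..<nxt L a}"
  shows "open U" "is_interval U" "U \<noteq> {}" "U \<subseteq> Xs" "bdd_below U"
    "inj_on h {a<..<nxt L a}" "continuous_on {a<..<nxt L a} h"
proof -
  have g: "good L" and c: "contp h L" and b: "bij_betw h Xs Xs" using ok unfolding ok_def by auto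
  have sub: "{a<..<nxt L a} \<subseteq> Xs" by (rule iv_sub[OF g a])
  show inj: "inj_on h {a<..<nxt L a}"
    using bij_betw_imp_inj_on[OF b] sub by (rule inj_on_subset)
  show cont: "continuous_on {a<..<nxt L a} h" using c a unfolding contp_def by auto
  show "open U" unfolding U_def
    by (rule injective_into_1d_imp_open_map_UNIV[OF _ cont inj]) auto
  show "is_interval U" unfolding U_def is_interval_connected_1
    by (rule connected_continuous_image[OF cont]) simp
  have "a < nxt L a" using nxt_gt'[OF g a] .
  then show "U \<noteq> {}" unfolding U_def by auto
  show UX: "U \<subseteq> Xs" unfolding U_def using sub bij_betw_imp_surj_on[OF b] by auto
  show "bdd_below U" using UX unfolding Xs_def by (intro bdd_belowI[of _ 0]) auto
qed

lemma bt_lt: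
  assumes ok: "ok h L" and a: "a \<in> L" and u: "u \<in> h ` {a<..<nxt L a}"
  shows "bt h L a < u"
proof -
  let ?U = "h ` {a<..<nxt L a}"
  note P = U_props[OF ok a]
  have le: "bt h L a \<le> u" unfolding bt_def using u P(5) by (rule cInf_lower)
  have "bt h L a \<notin> ?U"
  proof
    assume "bt h L a \<in> ?U"
    then obtain e where e: "e > 0" "ball (bt h L a) e \<subseteq> ?U" using P(1) open_contains_ball by blast
    then have "bt h L a - e / 2 \<in> ?U" by (auto simp: dist_real_def)
    then have "bt h L a \<le> bt h L a - e / 2" unfolding bt_def using P(5) by (intro cInf_lower)
    then show False using e by simp
  qed
  then show ?thesis using le u by (cases "bt h L a = u") auto
qed

lemma bt_delta:
  assumes ok: "ok h L" and a: "a \<in> L"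
  shows "\<exists>d>0. {bt h L a<..<bt h L a + d} \<subseteq> h ` {a<..<nxt L a}"
proof -
  let ?U = "h ` {a<..<nxt L a}"
  note P = U_props[OF ok a]
  obtain u where u: "u \<in> ?U" using P(3) by blast
  have lt: "bt h L a < u" using bt_lt[OF ok a u] .
  have "{bt h L a<..<bt h L a + (u - bt h L a)} \<subseteq> ?U"
  proof
    fix t assume t: "t \<in> {bt h L a<..<bt h L a + (u - bt h L a)}"
    then have "Inf ?U < t" unfolding bt_def by simp
    then obtain v where v: "v \<in> ?U" "v < t" using cInf_less_iff[OF P(3) P(5)] by blast
    have "v \<le> t" "t \<le> u" using v t by auto
    then show "t \<in> ?U" using P(2) v(1) u unfolding is_interval_1 by blast
  qed
  then show ?thesis using lt by (intro exI[of _ "u - bt h L a"]) auto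
qed

lemma U_disj:
  assumes ok: "ok h L" and a: "a \<in> L" "a' \<in> L" "a \<noteq> a'"
  shows "h ` {a<..<nxt L a} \<inter> h ` {a'<..<nxt L a'} = {}"
proof -
  have g: "good L" and b: "bij_betw h Xs Xs" using ok unfolding ok_def by auto
  have inj: "inj_on h Xs" using bij_betw_imp_inj_on[OF b] .
  have s1: "{a<..<nxt L a} \<subseteq> Xs" "{a'<..<nxt L a'} \<subseteq> Xs" using iv_sub[OF g] a by auto
  have d: "{a<..<nxt L a} \<inter> {a'<..<nxt L a'} = {}" using iv_disj[OF g a] .
  show ?thesis
  proof (rule ccontr)
    assume "h ` {a<..<nxt L a} \<inter> h ` {a'<..<nxt L a'} \<noteq> {}"
    then obtain x x' where x: "x \<in> {a<..<nxt L a}" "x' \<in> {a'<..<nxt L a'}" "h x = h x'" by blast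
    then have "x = x'" using inj s1 inj_on_eq_iff by (metis subsetD)
    then show False using x d by auto
  qed
qed

lemma bt_in:
  assumes ok: "ok h L" and a: "a \<in> L"
  shows "bt h L a \<in> h ` L"
proof -
  have g: "good L" and b: "bij_betw h Xs Xs" using ok unfolding ok_def by auto
  let ?U = "\<lambda>a. h ` {a<..<nxt L a}"
  note P = U_props[OF ok a]
  obtain d where d: "d > 0" "{bt h L a<..<bt h L a + d} \<subseteq> ?U a" using bt_delta[OF ok a] by blast
  obtain u where u: "u \<in> ?U a" using P(3) by blast
  have "0 \<le> bt h L a" unfolding bt_def using P(3,4) unfolding Xs_def by (intro cInf_greatest) auto
  moreover have "bt h L a < 1" using bt_lt[OF ok a u] u P(4) unfolding Xs_def by auto
  ultimately have "bt h L a \<in> Xs" unfolding Xs_def by simp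
  then obtain z where z: "z \<in> Xs" "h z = bt h L a" using bij_betw_imp_surj_on[OF b] by force
  obtain a' where a': "a' \<in> L" "a' \<le> z" "z < nxt L a'" using cover[OF g z(1)] by blast
  show ?thesis
  proof (cases "z = a'")
    case True
    then have "bt h L a = h a'" using z by simp
    then show ?thesis using a'(1) by blast
  next
    case False
    then have zi: "z \<in> {a'<..<nxt L a'}" using a' by auto
    then have bU: "bt h L a \<in> ?U a'" using z by force
    obtain e where e: "e > 0" "ball (bt h L a) e \<subseteq> ?U a'"
      using U_props(1)[OF ok a'(1)] bU open_contains_ball by blast
    define t where "t = bt h L a + min e d / 2"
    have "t \<in> ball (bt h L a) e" unfolding t_def using e d by (simp add: dist_real_def min_def)
    moreover have "t \<in> {bt h L a<..<bt h L a + d}" unfolding t_def using e d by (simp add: min_def)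
    ultimately have "t \<in> ?U a \<inter> ?U a'" using e d by blast
    then have "a = a'" using U_disj[OF ok a a'(1)] by blast
    then have "bt h L a \<in> ?U a" using bU by simp
    then have "bt h L a < bt h L a" using bt_lt[OF ok a] by blast
    then show ?thesis by simp
  qed
qed

lemma bt_inj:
  assumes ok: "ok h L"
  shows "inj_on (bt h L) L"
proof (rule inj_onI, rule ccontr)
  fix a a' assume a: "a \<in> L" "a' \<in> L" "bt h L a = bt h L a'" "a \<noteq> a'"
  obtain d where d: "d > 0" "{bt h L a<..<bt h L a + d} \<subseteq> h ` {a<..<nxt L a}" using bt_delta[OF ok a(1)] by blast
  obtain d' where d': "d' > 0" "{bt h L a'<..<bt h L a' + d'} \<subseteq> h ` {a'<..<nxt L a'}" using bt_delta[OF ok a(2)] by blast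
  define t where "t = bt h L a + min d d' / 2"
  have "t \<in> {bt h L a<..<bt h L a + d}" "t \<in> {bt h L a'<..<bt h L a' + d'}"
    unfolding t_def using d d' a(3) by (simp_all add: min_def)
  then have "t \<in> h ` {a<..<nxt L a} \<inter> h ` {a'<..<nxt L a'}" using d d' by blast
  then show False using U_disj[OF ok a(1,2,4)] by blast
qed

lemma sig_perm:
  assumes ok: "ok h L"
  shows "permutation (sigma_hP h (part L))"
proof -
  have g: "good L" and b: "bij_betw h Xs Xs" using ok unfolding ok_def by auto
  have "L \<subseteq> Xs" using g unfolding good_def by simp
  then have injL: "inj_on h L" using bij_betw_imp_inj_on[OF b] inj_on_subset by blast
  let ?s = "sigma_hP h (part L)"
  let ?S = "h ` L"
  have fS: "finite ?S" using g unfolding good_def by auto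
  have im: "?s ` ?S \<subseteq> ?S"
    using sig_in[OF g injL] bt_in[OF ok] by auto
  have inj: "inj_on ?s ?S"
  proof (rule inj_onI)
    fix x y assume "x \<in> ?S" "y \<in> ?S" "?s x = ?s y"
    then obtain a a' where a: "a \<in> L" "a' \<in> L" "x = h a" "y = h a'" "?s (h a) = ?s (h a')" by blast
    then have "bt h L a = bt h L a'" using sig_in[OF g injL] by simp
    then have "a = a'" using bt_inj[OF ok] a inj_on_eq_iff by metis
    then show "x = y" using a by simp
  qed
  have "?s ` ?S = ?S" using endo_inj_surj[OF fS im inj] .
  then have "bij_betw ?s ?S ?S" using inj unfolding bij_betw_def by simp
  then have "?s permutes ?S" by (rule bij_imp_permutes) (rule sig_out[OF g])
  then show ?thesis using fS by (intro permutes_imp_permutation)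
qed



lemma not_dec:
  assumes m: "strict_mono_on {a<..<b} h" and pq: "p < q" "a \<le> p" "q \<le> b"
  shows "\<not> dec h p q"
proof
  assume d: "dec h p q"
  define x where "x = p + (q - p) / 3"
  define y where "y = p + 2 * (q - p) / 3"
  have "p < x" using pq unfolding x_def by (simp add: field_simps)
  moreover have "x < y" using pq unfolding x_def y_def by (simp add: field_simps)
  moreover have "y < q" using pq unfolding y_def by (simp add: field_simps)
  ultimately have xy: "x \<in> {p<..<q}" "y \<in> {p<..<q}" "x < y" by auto
  then have "h y < h x" using d unfolding dec_def by blast
  moreover have "h x < h y" using monotone_onD[OF m, of x y] xy pq by auto
  ultimately show False by simp
qed

lemma yes_dec:
  assumes m: "strict_antimono_on {a<..<b} h" and pq: "a \<le> p" "q \<le> b"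
  shows "dec h p q"
  unfolding dec_def
proof (intro ballI impI)
  fix x y assume "x \<in> {p<..<q}" "y \<in> {p<..<q}" "x < y"
  then show "h y < h x" using monotone_onD[OF m, of x y] pq by auto
qed

lemma merge:
  assumes ok: "ok h L" and c: "c \<in> L" "c \<noteq> 0" and cc: "isCont h c"
  shows "ok h (L - {c}) \<and> eps_hP h (part L) = eps_hP h (part (L - {c}))"
proof -
  have g: "good L" and ct: "contp h L" and b: "bij_betw h Xs Xs" using ok unfolding ok_def by auto
  define L' where "L' = L - {c}"
  have fL: "finite L" using g unfolding good_def by simp
  have c01: "0 < c" "c < 1" using good_lt1[OF g c(1)] c(2) by auto
  let ?S = "{x\<in>L. x < c}"
  have fS: "finite ?S" using fL by simp
  have S0: "0 \<in> ?S" using g c01 unfolding good_def by simp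
  define a where "a = Max ?S"
  have aS: "a \<in> ?S" unfolding a_def using fS S0 by (intro Max_in) auto
  then have aL: "a \<in> L" and ac: "a < c" by auto
  have amax: "x \<le> a" if "x \<in> L" "x < c" for x
    unfolding a_def using fS that by (intro Max_ge) auto
  have nac: "nxt L a = c"
  proof (rule nxt_eqI[OF fL ac])
    show "c = 1 \<or> c \<in> L" using c by simp
    show "c \<le> 1" using c01 by simp
    fix x assume "x \<in> L" "a < x"
    then show "c \<le> x" using amax by force
  qed
  define bb where "bb = nxt L c"
  have cb: "c < bb" unfolding bb_def using nxt_gt'[OF g c(1)] .
  have b1: "bb \<le> 1" unfolding bb_def using nxt_le1[OF fL] .
  have bL: "bb = 1 \<or> bb \<in> L" unfolding bb_def using nxt_mem[OF fL] .
  have fL': "finite L'" unfolding L'_def using fL by simp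
  have g': "good L'" unfolding L'_def using g c(2) unfolding good_def by auto
  have aL': "a \<in> L'" unfolding L'_def using aL ac by simp
  have cL': "c \<notin> L'" unfolding L'_def by simp
  have na': "nxt L' a = bb"
  proof (rule nxt_eqI[OF fL'])
    show "a < bb" using ac cb by simp
    show "bb = 1 \<or> bb \<in> L'" using bL cb unfolding L'_def by auto
    show "bb \<le> 1" by fact
    fix x assume x: "x \<in> L'" "a < x"
    then have "x \<noteq> c" "x \<in> L" unfolding L'_def by auto
    moreover have "\<not> x < c" using amax x \<open>x \<in> L\<close> by force
    ultimately have "c < x" by simp
    then show "bb \<le> x" unfolding bb_def using nxt_min[OF fL \<open>x \<in> L\<close>] by simp
  qed
  have nx': "nxt L' x = nxt L x" if x: "x \<in> L'" "x \<noteq> a" for x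
  proof (rule nxt_eqI[OF fL'])
    have xL: "x \<in> L" "x \<noteq> c" using x unfolding L'_def by auto
    show "x < nxt L x" using nxt_gt'[OF g xL(1)] .
    have "nxt L x \<noteq> c"
    proof
      assume e: "nxt L x = c"
      then have "x < c" using nxt_gt'[OF g xL(1)] by simp
      then have "x < a" using amax[OF xL(1)] x(2) by simp
      then have "nxt L x \<le> a" using nxt_min[OF fL aL] by simp
      then show False using e ac by simp
    qed
    then show "nxt L x = 1 \<or> nxt L x \<in> L'" using nxt_mem[OF fL, of x] unfolding L'_def by auto
    show "nxt L x \<le> 1" using nxt_le1[OF fL] .
    fix y assume "y \<in> L'" "x < y"
    then show "nxt L x \<le> y" using nxt_min[OF fL] unfolding L'_def by auto
  qed
  have cont_ab: "continuous_on {a<..<bb} h"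
  proof -
    have "isCont h y" if y: "y \<in> {a<..<bb}" for y
    proof -
      consider "y < c" | "y = c" | "c < y" by linarith
      then show ?thesis
      proof cases
        case 1
        then have "y \<in> {a<..<nxt L a}" using y nac by simp
        moreover have "continuous_on {a<..<nxt L a} h" using ct aL unfolding contp_def by blast
        moreover have "open {a<..<nxt L a}" by simp
        ultimately show ?thesis using continuous_on_eq_continuous_at[of "{a<..<nxt L a}" h] by blast
      next
        case 2 then show ?thesis using cc by simp
      next
        case 3
        then have "y \<in> {c<..<nxt L c}" using y bb_def by simp
        moreover have "continuous_on {c<..<nxt L c} h" using ct c(1) unfolding contp_def by blast
        moreover have "open {c<..<nxt L c}" by simp
        ultimately show ?thesis using continuous_on_eq_continuous_at[of "{c<..<nxt L c}" h] by blast
      qed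
    qed
    then show ?thesis by (intro continuous_at_imp_continuous_on) auto
  qed
  have ct': "contp h L'"
    unfolding contp_def
  proof
    fix x assume x: "x \<in> L'"
    show "continuous_on {x<..<nxt L' x} h"
    proof (cases "x = a")
      case True then show ?thesis using na' cont_ab by simp
    next
      case False
      then show ?thesis using nx'[OF x False] ct x unfolding contp_def L'_def by auto
    qed
  qed
  have ok': "ok h L'" unfolding ok_def using g' ct' b by simp
  have injX: "inj_on h Xs" using bij_betw_imp_inj_on[OF b] .
  have LX: "L \<subseteq> Xs" using g unfolding good_def by simp
  have injL: "inj_on h L" using injX LX inj_on_subset by blast
  have injL': "inj_on h L'" using injL unfolding L'_def by (rule inj_on_subset) auto
  have a0: "0 \<le> a" using good_lt1[OF g aL] by simp
  have subab: "{a<..<bb} \<subseteq> Xs" using a0 b1 unfolding Xs_def by auto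
  have injab: "inj_on h {a<..<bb}" using injX subab inj_on_subset by blast
  have mono: "strict_mono_on {a<..<bb} h \<or> strict_antimono_on {a<..<bb} h"
    using injective_eq_monotone_map[of "{a<..<bb}" h] cont_ab injab
    unfolding is_interval_connected_1 by simp
  have "h ` {a<..<bb} \<subseteq> Xs" using subab bij_betw_imp_surj_on[OF b] by auto
  then have bdd: "bdd_below (h ` {a<..<bb})"
    unfolding Xs_def by (intro bdd_belowI[of _ 0]) auto
  have hc: "h c \<notin> h ` L'"
  proof
    assume "h c \<in> h ` L'"
    then obtain y where "y \<in> L'" "h c = h y" by blast
    then show False using injL c(1) unfolding L'_def by (auto dest: inj_onD)
  qed
  have ha_hc: "h a \<noteq> h c" using injL aL c(1) ac inj_on_eq_iff by fastforce
  have bt_a: "bt h L a = Inf (h ` {a<..<c})" unfolding bt_def nac ..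
  have bt'_a: "bt h L' a = Inf (h ` {a<..<bb})" unfolding bt_def na' ..
  have bt_c: "bt h L c = Inf (h ` {c<..<bb})" unfolding bt_def bb_def ..
  have bt_o: "bt h L' y = bt h L y" if "y \<in> L'" "y \<noteq> a" for y
    unfolding bt_def nx'[OF that] ..
  have RL: "R_hP h (part L) = card {x\<in>L. dec h x (nxt L x)}" using R_part[OF g] .
  have RL': "R_hP h (part L') = card {x\<in>L'. dec h x (nxt L' x)}" using R_part[OF g'] .
  have perm': "permutation (sigma_hP h (part L'))" using sig_perm[OF ok'] .
  from mono show ?thesis
  proof
    assume m: "strict_mono_on {a<..<bb} h"
    have D: "{x\<in>L. dec h x (nxt L x)} = {x\<in>L'. dec h x (nxt L' x)}"
    proof (rule Collect_cong)
      fix x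
      show "(x \<in> L \<and> dec h x (nxt L x)) = (x \<in> L' \<and> dec h x (nxt L' x))"
      proof (cases "x = c \<or> x = a")
        case True
        have "\<not> dec h c (nxt L c)" using not_dec[OF m cb] ac unfolding bb_def by simp
        moreover have "\<not> dec h a (nxt L a)" using not_dec[OF m ac] cb nac by simp
        moreover have "\<not> dec h a (nxt L' a)" using not_dec[OF m] ac cb na' by simp
        ultimately show ?thesis using True cL' c(1) aL aL' by auto
      next
        case False
        then show ?thesis using nx'[of x] unfolding L'_def by auto
      qed
    qed
    have sig: "sigma_hP h (part L) = sigma_hP h (part L')"
    proof
      fix x
      show "sigma_hP h (part L) x = sigma_hP h (part L') x"
      proof (cases "x \<in> h ` L'")
        case True
        then obtain y where y: "y \<in> L'" "x = h y" by blast
        have yL: "y \<in> L" using y unfolding L'_def by simp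
        show ?thesis
        proof (cases "y = a")
          case True
          have "Inf (h ` {a<..<c}) = Inf (h ` {a<..<bb})"
          proof (rule inf_dom)
            show "h ` {a<..<c} \<subseteq> h ` {a<..<bb}" using cb by auto
            show "h ` {a<..<c} \<noteq> {}" using ac by auto
            show "bdd_below (h ` {a<..<bb})" by fact
            fix z assume "z \<in> h ` {a<..<bb}"
            then obtain w where w: "w \<in> {a<..<bb}" "z = h w" by blast
            show "\<exists>x\<in>h ` {a<..<c}. x \<le> z"
            proof (cases "w < c")
              case True then show ?thesis using w by auto
            next
              case False
              have "(a + c) / 2 \<in> {a<..<bb}" "(a + c) / 2 < w" using ac cb False by auto
              then have "h ((a + c) / 2) < h w" using monotone_onD[OF m _ w(1)] by blast
              moreover have "(a + c) / 2 \<in> {a<..<c}" using ac by auto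
              ultimately show ?thesis using w by (intro bexI[of _ "h ((a + c) / 2)"]) auto
            qed
          qed
          then show ?thesis using True y sig_in[OF g injL aL] sig_in[OF g' injL' aL'] bt_a bt'_a by simp
        next
          case False
          then show ?thesis using y yL sig_in[OF g injL yL] sig_in[OF g' injL' y(1)] bt_o by simp
        qed
      next
        case False
        note nx = False
        show ?thesis
        proof (cases "x = h c")
          case True
          have "Inf (h ` {c<..<bb}) = h c"
          proof (rule inf_cont[of _ c bb])
            fix y assume "y \<in> {c<..<bb}"
            then show "h c \<le> h y" using monotone_onD[OF m, of c y] ac cb by auto
          qed (use cb cc in auto)
          then show ?thesis using True sig_in[OF g injL c(1)] bt_c sig_out[OF g' hc] by simp
        next
          case False
          then have "x \<notin> h ` L" using nx unfolding L'_def by auto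
          then show ?thesis using sig_out[OF g] sig_out[OF g' nx] by simp
        qed
      qed
    qed
    show ?thesis using ok' RL RL' D sig unfolding eps_hP_def L'_def by simp
  next
    assume m: "strict_antimono_on {a<..<bb} h"
    have D: "{x\<in>L. dec h x (nxt L x)} = insert c {x\<in>L'. dec h x (nxt L' x)}"
    proof (rule set_eqI)
      fix x
      show "(x \<in> {x\<in>L. dec h x (nxt L x)}) = (x \<in> insert c {x\<in>L'. dec h x (nxt L' x)})"
      proof (cases "x = c \<or> x = a")
        case True
        have "dec h c (nxt L c)" using yes_dec[OF m] ac unfolding bb_def by simp
        moreover have "dec h a (nxt L a)" using yes_dec[OF m] cb nac by simp
        moreover have "dec h a (nxt L' a)" using yes_dec[OF m] na' by simp
        ultimately show ?thesis using True c(1) aL aL' by auto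
      next
        case False
        then show ?thesis using nx'[of x] unfolding L'_def by auto
      qed
    qed
    have cD: "c \<notin> {x\<in>L'. dec h x (nxt L' x)}" unfolding L'_def by simp
    have fD: "finite {x\<in>L'. dec h x (nxt L' x)}" using fL' by simp
    have card: "card {x\<in>L. dec h x (nxt L x)} = Suc (card {x\<in>L'. dec h x (nxt L' x)})"
      unfolding D using cD fD by simp
    have sig: "sigma_hP h (part L) = sigma_hP h (part L') \<circ> Transposition.transpose (h a) (h c)"
    proof
      fix x
      show "sigma_hP h (part L) x = (sigma_hP h (part L') \<circ> Transposition.transpose (h a) (h c)) x"
      proof (cases "x = h a")
        case True
        have "Inf (h ` {a<..<c}) = h c"
        proof (rule inf_cont[of _ c a])
          fix y assume "y \<in> {a<..<c}"
          then show "h c \<le> h y" using monotone_onD[OF m, of y c] ac cb by auto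
        qed (use ac cc in auto)
        then show ?thesis using True sig_in[OF g injL aL] bt_a sig_out[OF g' hc] by simp
      next
        case False
        note nha = False
        show ?thesis
        proof (cases "x = h c")
          case True
          have "Inf (h ` {c<..<bb}) = Inf (h ` {a<..<bb})"
          proof (rule inf_dom)
            show "h ` {c<..<bb} \<subseteq> h ` {a<..<bb}" using ac by auto
            show "h ` {c<..<bb} \<noteq> {}" using cb by auto
            show "bdd_below (h ` {a<..<bb})" by fact
            fix z assume "z \<in> h ` {a<..<bb}"
            then obtain w where w: "w \<in> {a<..<bb}" "z = h w" by blast
            show "\<exists>x\<in>h ` {c<..<bb}. x \<le> z"
            proof (cases "c < w")
              case True then show ?thesis using w by auto
            next
              case False
              have "(c + bb) / 2 \<in> {a<..<bb}" "w < (c + bb) / 2" using ac cb False by auto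
              then have "h ((c + bb) / 2) < h w" using monotone_onD[OF m w(1)] by blast
              moreover have "(c + bb) / 2 \<in> {c<..<bb}" using cb by auto
              ultimately show ?thesis using w by (intro bexI[of _ "h ((c + bb) / 2)"]) auto
            qed
          qed
          then show ?thesis using True ha_hc sig_in[OF g injL c(1)] sig_in[OF g' injL' aL'] bt_c bt'_a
            by simp
        next
          case False
          have tr: "Transposition.transpose (h a) (h c) x = x" using False nha by simp
          show ?thesis
          proof (cases "x \<in> h ` L'")
            case True
            then obtain y where y: "y \<in> L'" "x = h y" by blast
            have yL: "y \<in> L" using y unfolding L'_def by simp
            have "y \<noteq> a" using nha y by auto
            then show ?thesis using tr y yL sig_in[OF g injL yL] sig_in[OF g' injL' y(1)] bt_o by simp
          next
            case nx: False
            then have "x \<notin> h ` L" using False unfolding L'_def by auto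
            then show ?thesis using tr sig_out[OF g] sig_out[OF g' nx] by simp
          qed
        qed
      qed
    qed
    have ev: "evenperm (sigma_hP h (part L)) = (\<not> evenperm (sigma_hP h (part L')))"
    proof -
      have e1: "evenperm (Transposition.transpose (h a) (h c)) = False"
        using evenperm_swap[of "h a" "h c"] ha_hc by simp
      show ?thesis unfolding sig
        using evenperm_comp[OF perm' permutation_swap_id[of "h a" "h c"]] e1 by simp
    qed
    show ?thesis using ok' unfolding eps_hP_def RL RL' card sgn2_def L'_def[symmetric]
      using ev by auto
  qed
qed



definition Dset :: "(real \<Rightarrow> real) \<Rightarrow> real set" where
  "Dset h = {x\<in>{0<..<1}. \<not> isCont h x}"

definition L0 :: "(real \<Rightarrow> real) \<Rightarrow> real set" where
  "L0 h = insert 0 (Dset h)"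

lemma D_fin:
  assumes "PC_hat h" shows "finite (Dset h)"
proof -
  obtain F where F: "finite F" "\<And>x. x \<in> Xs - F \<Longrightarrow> continuous (at x within Xs) h"
    using assms unfolding PC_hat_def by blast
  have "Dset h \<subseteq> F"
  proof
    fix x assume x: "x \<in> Dset h"
    show "x \<in> F"
    proof (rule ccontr)
      assume "x \<notin> F"
      moreover have x01: "x \<in> {0<..<1}" using x unfolding Dset_def by simp
      ultimately have "x \<in> Xs - F" unfolding Xs_def by auto
      then have "continuous (at x within Xs) h" using F(2) by blast
      then have "continuous (at x within {0<..<1}) h"
        by (rule continuous_within_subset) (auto simp: Xs_def)
      then have "isCont h x" using at_within_open[OF x01] by simp
      then show False using x unfolding Dset_def by simp
    qed
  qed
  then show ?thesis using F(1) finite_subset by blast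
qed

lemma L0_sub:
  assumes ok: "ok h L" shows "L0 h \<subseteq> L"
proof
  have g: "good L" and ct: "contp h L" using ok unfolding ok_def by auto
  fix x assume x: "x \<in> L0 h"
  show "x \<in> L"
  proof (cases "x = 0")
    case True then show ?thesis using g unfolding good_def by simp
  next
    case False
    then have xD: "x \<in> Dset h" using x unfolding L0_def by simp
    then have "x \<in> Xs" unfolding Dset_def Xs_def by auto
    then obtain a where a: "a \<in> L" "a \<le> x" "x < nxt L a" using cover[OF g] by blast
    show ?thesis
    proof (cases "a = x")
      case True then show ?thesis using a by simp
    next
      case False
      then have xi: "x \<in> {a<..<nxt L a}" using a by auto
      have "continuous_on {a<..<nxt L a} h" using ct a(1) unfolding contp_def by blast
      moreover have "open {a<..<nxt L a}" by simp
      ultimately have "isCont h x" using xi continuous_on_eq_continuous_at by blast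
      then show ?thesis using xD unfolding Dset_def by simp
    qed
  qed
qed

lemma L0_ok:
  assumes pc: "PC_hat h" shows "ok h (L0 h)"
proof -
  have b: "bij_betw h Xs Xs" using pc unfolding PC_hat_def by simp
  have g: "good (L0 h)" unfolding good_def L0_def
    using D_fin[OF pc] unfolding Dset_def Xs_def by auto
  have fL: "finite (L0 h)" using g unfolding good_def by simp
  have ct: "contp h (L0 h)"
    unfolding contp_def
  proof
    fix a assume a: "a \<in> L0 h"
    show "continuous_on {a<..<nxt (L0 h) a} h"
    proof (rule continuous_at_imp_continuous_on, rule ballI)
      fix y assume y: "y \<in> {a<..<nxt (L0 h) a}"
      have "0 \<le> a" using good_lt1[OF g a] by simp
      moreover have "nxt (L0 h) a \<le> 1" using nxt_le1[OF fL] .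
      ultimately have y01: "y \<in> {0<..<1}" using y by auto
      have "y \<notin> Dset h"
      proof
        assume "y \<in> Dset h"
        then have "y \<in> L0 h" unfolding L0_def by simp
        then have "nxt (L0 h) a \<le> y" using nxt_min[OF fL] y by simp
        then show False using y by simp
      qed
      then show "isCont h y" using y01 unfolding Dset_def by simp
    qed
  qed
  show ?thesis unfolding ok_def using g ct b by simp
qed

lemma main_ind:
  assumes pc: "PC_hat h"
  shows "ok h L \<Longrightarrow> eps_hP h (part L) = eps_hP h (part (L0 h))"
proof (induction "card L" arbitrary: L rule: less_induct)
  case less
  have ok: "ok h L" by fact
  have g: "good L" using ok unfolding ok_def by simp
  have fL: "finite L" using g unfolding good_def by simp
  have sub: "L0 h \<subseteq> L" using L0_sub[OF ok] .
  show ?case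
  proof (cases "L = L0 h")
    case True then show ?thesis by simp
  next
    case False
    then obtain c where c: "c \<in> L" "c \<notin> L0 h" using sub by blast
    have c0: "c \<noteq> 0" using c unfolding L0_def by auto
    have "c \<in> {0<..<1}" using good_lt1[OF g c(1)] c0 by auto
    then have cc: "isCont h c" using c(2) unfolding L0_def Dset_def by auto
    have m: "ok h (L - {c}) \<and> eps_hP h (part L) = eps_hP h (part (L - {c}))"
      using merge[OF ok c(1) c0 cc] .
    have "card (L - {c}) < card L" by (rule card_Diff1_less[OF fL c(1)])
    then have "eps_hP h (part (L - {c})) = eps_hP h (part (L0 h))"
      using less.hyps m by blast
    then show ?thesis using m by simp
  qed
qed

lemma Pmin_eq:
  assumes pc: "PC_hat h" shows "Pmin h = part (L0 h)"
proof -
  have b: "bij_betw h Xs Xs" using pc unfolding PC_hat_def by simp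
  have ok0: "ok h (L0 h)" using L0_ok[OF pc] .
  have g0: "good (L0 h)" using ok0 unfolding ok_def by simp
  have decomp: "ok h (lend ` Q) \<and> Q = part (lend ` Q) \<and> L0 h \<subseteq> lend ` Q"
    if "assoc_partition h Q" for Q
  proof -
    have "good (lend ` Q) \<and> contp h (lend ` Q) \<and> Q = part (lend ` Q)"
      using assoc_part[OF that refl] .
    then have "ok h (lend ` Q)" "Q = part (lend ` Q)" unfolding ok_def using b by auto
    then show ?thesis using L0_sub by blast
  qed
  show ?thesis unfolding Pmin_def
  proof (rule the_equality)
    show "assoc_partition h (part (L0 h)) \<and> (\<forall>Q. assoc_partition h Q \<longrightarrow> card (part (L0 h)) \<le> card Q)"
    proof (intro conjI allI impI)
      show "assoc_partition h (part (L0 h))" using part_assoc g0 ok0 unfolding ok_def by blast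
      fix Q assume Q: "assoc_partition h Q"
      have d: "ok h (lend ` Q)" "Q = part (lend ` Q)" "L0 h \<subseteq> lend ` Q" using decomp[OF Q] by auto
      have gQ: "good (lend ` Q)" using d(1) unfolding ok_def by simp
      have "card (L0 h) \<le> card (lend ` Q)" using d(3) gQ unfolding good_def by (intro card_mono) auto
      then show "card (part (L0 h)) \<le> card Q" using card_part[OF g0] card_part[OF gQ] d(2) by simp
    qed
    fix P assume P: "assoc_partition h P \<and> (\<forall>Q. assoc_partition h Q \<longrightarrow> card P \<le> card Q)"
    have d: "ok h (lend ` P)" "P = part (lend ` P)" "L0 h \<subseteq> lend ` P" using decomp P by auto
    have gP: "good (lend ` P)" using d(1) unfolding ok_def by simp
    have "card P \<le> card (part (L0 h))" using P part_assoc g0 ok0 unfolding ok_def by blast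
    then have "card (lend ` P) \<le> card (L0 h)" using card_part[OF g0] card_part[OF gP] d(2) by simp
    moreover have "card (L0 h) \<le> card (lend ` P)" using d(3) gP unfolding good_def by (intro card_mono) auto
    ultimately have "L0 h = lend ` P" using d(3) gP unfolding good_def
      by (intro card_subset_eq) auto
    then show "P = part (L0 h)" using d(2) by simp
  qed
qed

theorem lemma3p6:
  fixes h :: "real \<Rightarrow> real" and P :: "real set set"
  assumes "PC_hat h" and "assoc_partition h P"
  shows "eps_h h = eps_hP h P"
proof -
  have b: "bij_betw h Xs Xs" using assms(1) unfolding PC_hat_def by simp
  have d: "good (lend ` P) \<and> contp h (lend ` P) \<and> P = part (lend ` P)"
    using assoc_part[OF assms(2) refl] .
  then have ok: "ok h (lend ` P)" unfolding ok_def using b by simp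
  have "eps_hP h P = eps_hP h (part (L0 h))"
    using main_ind[OF assms(1) ok] d by simp
  then show ?thesis unfolding eps_h_def Pmin_eq[OF assms(1)] by simp
qed


end
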